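(* Let $R$ be a linear involution of $\mathbb{T}^2$ induced by an integer matrix $A$ with $\det A=\pm1$, $A^2=\mathrm{Id}$, $A\neq\pm\mathrm{Id}$. Then the set of area-preserving $R$-reversible Anosov diffeomorphisms of $\mathbb{T}^2$ is non-empty and has no isolated points in the $C^1$ topology.
   Context: $\mathbb{T}^2=\mathbb{R}^2/\mathbb{Z}^2$ with normalized Lebesgue measure $\mu$. A diffeomorphism $f$ is $R$-reversible if $R\circ f=f^{-1}\circ R$; it is Anosov if $\mathbb{T}^2$ is a uniformly hyperbolic set for $f$. *)

theory Defs
  imports "HOL-Analysis.Analysis"
begin

text \<open>The torus T^2 = R^2/Z^2 is handled through lifts to R^2 = real^2.\<close>

definition int_vec :: "real^2 \<Rightarrow> bool" where
  "int_vec x \<longleftrightarrow> (\<forall>i. x $ i \<in> \<int>)"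

text \<open>Two points of R^2 represent the same point of the torus.\<close>
definition teq :: "real^2 \<Rightarrow> real^2 \<Rightarrow> bool" where
  "teq x y \<longleftrightarrow> int_vec (x - y)"

text \<open>Two lifts represent the same map of the torus.\<close>
definition tmap_eq :: "(real^2 \<Rightarrow> real^2) \<Rightarrow> (real^2 \<Rightarrow> real^2) \<Rightarrow> bool" where
  "tmap_eq F G \<longleftrightarrow> (\<forall>x. teq (F x) (G x))"

definition descends :: "(real^2 \<Rightarrow> real^2) \<Rightarrow> bool" where
  "descends F \<longleftrightarrow> (\<forall>x k. int_vec k \<longrightarrow> int_vec (F (x + k) - F x))"

definition C1_map :: "(real^2 \<Rightarrow> real^2) \<Rightarrow> bool" where
  "C1_map F \<longleftrightarrow> (\<forall>x. F differentiable (at x)) \<and>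
     continuous_on UNIV (\<lambda>x. matrix (frechet_derivative F (at x)))"

text \<open>(F, G) are lifts of a C^1 diffeomorphism of the torus and of its inverse.\<close>
definition torus_diffeo :: "(real^2 \<Rightarrow> real^2) \<Rightarrow> (real^2 \<Rightarrow> real^2) \<Rightarrow> bool" where
  "torus_diffeo F G \<longleftrightarrow> descends F \<and> descends G \<and> C1_map F \<and> C1_map G \<and>
     (\<forall>x. G (F x) = x) \<and> (\<forall>y. F (G y) = y)"

definition unit_cube :: "(real^2) set" where
  "unit_cube = {x. \<forall>i. 0 \<le> x $ i \<and> x $ i < 1}"

text \<open>Z^2-periodic subsets of R^2 = subsets of the torus.\<close>
definition periodic_set :: "(real^2) set \<Rightarrow> bool" where
  "periodic_set E \<longleftrightarrow> (\<forall>x k. int_vec k \<longrightarrow> (x + k \<in> E \<longleftrightarrow> x \<in> E))"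

text \<open>f preserves the normalized Lebesgue measure mu of the torus: mu(f^-1 E) = mu(E).\<close>
definition area_preserving :: "(real^2 \<Rightarrow> real^2) \<Rightarrow> bool" where
  "area_preserving F \<longleftrightarrow>
     (\<forall>E. E \<in> sets lborel \<and> periodic_set E \<longrightarrow>
        emeasure lborel ({x. F x \<in> E} \<inter> unit_cube) = emeasure lborel (E \<inter> unit_cube))"

definition of_int_mat :: "int^2^2 \<Rightarrow> real^2^2" where
  "of_int_mat A = (\<chi> i j. real_of_int (A $ i $ j))"

definition lin_lift :: "int^2^2 \<Rightarrow> real^2 \<Rightarrow> real^2" where
  "lin_lift A x = of_int_mat A *v x"

text \<open>R o f = f^-1 o R on the torus, with R induced by A, G a lift of f^-1.\<close>
definition reversible :: "int^2^2 \<Rightarrow> (real^2 \<Rightarrow> real^2) \<Rightarrow> (real^2 \<Rightarrow> real^2) \<Rightarrow> bool" where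
  "reversible A F G \<longleftrightarrow> (\<forall>x. teq (lin_lift A (F x)) (G (lin_lift A x)))"

definition anosov :: "(real^2 \<Rightarrow> real^2) \<Rightarrow> (real^2 \<Rightarrow> real^2) \<Rightarrow> bool" where
  "anosov F G \<longleftrightarrow>
    (\<exists>C lam Es Eu. C > 0 \<and> 0 < lam \<and> lam < 1 \<and>
      (\<forall>x k. int_vec k \<longrightarrow> Es (x + k) = Es x \<and> Eu (x + k) = Eu x) \<and>
      (\<forall>x. subspace (Es x) \<and> subspace (Eu x) \<and> Es x \<inter> Eu x = {0} \<and>
           {a + b | a b. a \<in> Es x \<and> b \<in> Eu x} = UNIV \<and>
           frechet_derivative F (at x) ` Es x = Es (F x) \<and>
           frechet_derivative F (at x) ` Eu x = Eu (F x) \<and>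
           (\<forall>n v. v \<in> Es x \<longrightarrow>
              norm (frechet_derivative (F ^^ n) (at x) v) \<le> C * lam ^ n * norm v) \<and>
           (\<forall>n v. v \<in> Eu x \<longrightarrow>
              norm (frechet_derivative (G ^^ n) (at x) v) \<le> C * lam ^ n * norm v)))"

definition good_map :: "int^2^2 \<Rightarrow> (real^2 \<Rightarrow> real^2) \<Rightarrow> (real^2 \<Rightarrow> real^2) \<Rightarrow> bool" where
  "good_map A F G \<longleftrightarrow> torus_diffeo F G \<and> area_preserving F \<and> reversible A F G \<and> anosov F G"

end

theory Submission
  imports Defs
begin

lemma int_vec_add: "int_vec a \<Longrightarrow> int_vec b \<Longrightarrow> int_vec (a + b)"
  by (auto simp: int_vec_def)
lemma int_vec_diff: "int_vec a \<Longrightarrow> int_vec b \<Longrightarrow> int_vec (a - b)"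
  by (auto simp: int_vec_def)
lemma int_vec_uminus: "int_vec a \<Longrightarrow> int_vec (- a)"
  by (auto simp: int_vec_def)
lemma int_vec_0[simp]: "int_vec 0"
  by (auto simp: int_vec_def)

lemma cube_shift_ex: "\<exists>m. int_vec m \<and> x + m \<in> unit_cube"
proof -
  define m :: "real^2" where "m = (\<chi> i. - of_int \<lfloor>x $ i\<rfloor>)"
  have "int_vec m" by (auto simp: m_def int_vec_def)
  moreover have "x + m \<in> unit_cube"
    by (auto simp: unit_cube_def m_def) linarith+
  ultimately show ?thesis by blast
qed

lemma cube_unique:
  assumes "y \<in> unit_cube" "y + k \<in> unit_cube" "int_vec k" shows "k = 0"
proof -
  have "k $ i = 0" for i
  proof -
    from assms(3) obtain n where n: "k $ i = of_int n" by (auto simp: int_vec_def elim: Ints_cases)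
    from assms(1,2) have "0 \<le> y$i" "y$i < 1" "0 \<le> y$i + k$i" "y$i + k$i < 1"
      by (auto simp: unit_cube_def)
    then have "-1 < real_of_int n" "real_of_int n < 1" using n by auto
    then show ?thesis using n by auto
  qed
  then show ?thesis by (simp add: vec_eq_iff)
qed

lemma norm_cube: "x \<in> unit_cube \<Longrightarrow> norm x \<le> 2"
proof -
  assume x: "x \<in> unit_cube"
  have "norm x \<le> sum (\<lambda>i. \<bar>x$i\<bar>) UNIV" by (rule norm_le_l1_cart)
  also have "\<dots> = \<bar>x$1\<bar> + \<bar>x$2\<bar>" by (simp add: sum_2)
  also have "\<dots> \<le> 2" using x unfolding unit_cube_def by (smt (verit) mem_Collect_eq)
  finally show ?thesis .
qed

lemma int_vec_sep:
  assumes "int_vec u" "int_vec v" "u \<noteq> v" shows "1 \<le> norm (u - v)"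
proof -
  obtain i where i: "u $ i \<noteq> v $ i" using assms(3) by (auto simp: vec_eq_iff)
  have "u $ i - v $ i \<in> \<int>" using assms by (auto simp: int_vec_def)
  then obtain n where n: "u$i - v$i = of_int n" by (auto elim: Ints_cases)
  with i have "n \<noteq> 0" by auto
  then have "1 \<le> \<bar>u$i - v$i\<bar>" using n by linarith
  also have "\<dots> \<le> norm (u - v)" using component_le_norm_cart[of "u - v" i] by simp
  finally show ?thesis .
qed

lemma const_int_valued:
  fixes g :: "'a::topological_space \<Rightarrow> real^2"
  assumes "connected S" "continuous_on S g" "\<And>x. x \<in> S \<Longrightarrow> int_vec (g x)" "a \<in> S" "x \<in> S"
  shows "g x = g a"
proof -
  have "(\<lambda>x. g x $ i) constant_on S" for i
  proof (rule continuous_discrete_range_constant[OF assms(1)])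
    show "continuous_on S (\<lambda>x. g x $ i)"
      by (intro continuous_intros assms(2))
    fix x assume x: "x \<in> S"
    show "\<exists>e>0. \<forall>y. y \<in> S \<and> g y $ i \<noteq> g x $ i \<longrightarrow> e \<le> norm (g y $ i - g x $ i)"
    proof (intro exI[of _ 1] conjI allI impI)
      fix y assume y: "y \<in> S \<and> g y $ i \<noteq> g x $ i"
      have "g y $ i - g x $ i \<in> \<int>" using assms(3) x y by (auto simp: int_vec_def)
      then obtain n where n: "g y $ i - g x $ i = of_int n" by (auto elim: Ints_cases)
      with y have "n \<noteq> 0" by auto
      then show "1 \<le> norm (g y $ i - g x $ i)" using n by (simp only: n real_norm_def)
    qed simp
  qed
  then show ?thesis using assms(4,5) by (auto simp: constant_on_def vec_eq_iff) metis
qed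

lemma cube_borel: "unit_cube \<in> sets lborel"
proof -
  have "unit_cube = {x::real^2. 0 \<le> x$1 \<and> x$1 < 1 \<and> 0 \<le> x$2 \<and> x$2 < 1}"
    by (auto simp: unit_cube_def forall_2)
  also have "\<dots> \<in> sets lborel" by measurable
  finally show ?thesis .
qed

lemma countable_Z: "countable {k::real^2. int_vec k}"
proof -
  have "{k::real^2. int_vec k} \<subseteq> (\<lambda>f::2\<Rightarrow>int. \<chi> i. real_of_int (f i)) ` UNIV"
  proof
    fix k :: "real^2" assume "k \<in> {k. int_vec k}"
    then have "\<forall>i. \<exists>n. k $ i = real_of_int n" by (auto simp: int_vec_def elim!: Ints_cases)
    then obtain f where "\<forall>i. k $ i = real_of_int (f i)" by metis
    then have "k = (\<chi> i. real_of_int (f i))" by (simp add: vec_eq_iff)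
    then show "k \<in> range (\<lambda>f::2\<Rightarrow>int. \<chi> i. real_of_int (f i))" by blast
  qed
  then show ?thesis by (rule countable_subset) simp
qed

lemma emeasure_translate:
  assumes "Y \<in> sets lborel"
  shows "emeasure lborel {x::real^2. x + k \<in> Y} = emeasure lborel Y"
proof -
  have "emeasure lborel Y = emeasure (distr lborel borel ((+) k)) Y"
    by (simp add: lborel_distr_plus)
  also have "\<dots> = emeasure lborel ((+) k -` Y \<inter> space lborel)"
    using assms by (subst emeasure_distr) auto
  also have "(+) k -` Y \<inter> space lborel = {x. x + k \<in> Y}" by (auto simp: add.commute)
  finally show ?thesis by simp
qed

lemma fundamental_domain:
  assumes D: "D \<in> sets lborel"
    and ex: "\<And>x. \<exists>k. int_vec k \<and> x + k \<in> D"
    and un: "\<And>x k k'. int_vec k \<Longrightarrow> int_vec k' \<Longrightarrow> x + k \<in> D \<Longrightarrow> x + k' \<in> D \<Longrightarrow> k = k'"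
    and P: "P \<in> sets lborel" "periodic_set P"
  shows "emeasure lborel (P \<inter> D) = emeasure lborel (P \<inter> unit_cube)"
proof -
  let ?Z = "{k::real^2. int_vec k}"
  define X where "X k = P \<inter> D \<inter> {x. x + k \<in> unit_cube}" for k
  define Y where "Y k = P \<inter> {y. y - k \<in> D} \<inter> unit_cube" for k
  have cube[measurable]: "unit_cube \<in> sets lborel" by (rule cube_borel)
  note [measurable] = D P(1)
  have Xs: "X k \<in> sets lborel" for k unfolding X_def by measurable
  have Ys: "Y k \<in> sets lborel" for k unfolding Y_def by measurable
  have PD: "P \<inter> D = \<Union>(X ` ?Z)"
  proof safe
    fix x assume x: "x \<in> P" "x \<in> D"
    obtain m where "int_vec m" "x + m \<in> unit_cube" using cube_shift_ex by blast
    then show "x \<in> \<Union>(X ` ?Z)" using x by (auto simp: X_def)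
  qed (auto simp: X_def)
  have PC: "P \<inter> unit_cube = \<Union>(Y ` ?Z)"
  proof safe
    fix y assume y: "y \<in> P" "y \<in> unit_cube"
    obtain m where m: "int_vec m" "y + m \<in> D" using ex by blast
    have "y - (- m) \<in> D" using m by simp
    then show "y \<in> \<Union>(Y ` ?Z)" using y m(1) int_vec_uminus[OF m(1)] by (auto simp: Y_def)
  qed (auto simp: Y_def)
  have dX: "disjoint_family_on X ?Z"
    unfolding disjoint_family_on_def
  proof safe
    fix k k' x assume k: "int_vec k" "int_vec k'" "k \<noteq> k'" "x \<in> X k" "x \<in> X k'"
    have "(x + k) + (k' - k) \<in> unit_cube" using k by (auto simp: X_def algebra_simps)
    then have "k' - k = 0" using cube_unique[of "x + k" "k' - k"] k by (auto simp: X_def int_vec_diff)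
    then show "x \<in> {}" using k by simp
  qed
  have dY: "disjoint_family_on Y ?Z"
    unfolding disjoint_family_on_def
  proof safe
    fix k k' x assume k: "int_vec k" "int_vec k'" "k \<noteq> k'" "x \<in> Y k" "x \<in> Y k'"
    have "x + (- k) \<in> D" "x + (- k') \<in> D" using k by (auto simp: Y_def)
    then have "- k = - k'" using un int_vec_uminus k(1,2) by blast
    then show "x \<in> {}" using k by simp
  qed
  have XY: "emeasure lborel (X k) = emeasure lborel (Y k)" if k: "int_vec k" for k
  proof -
    have "X k = {x. x + k \<in> Y k}"
    proof -
      have "x + k \<in> P \<longleftrightarrow> x \<in> P" for x using P(2) k by (simp add: periodic_set_def)
      then show ?thesis by (auto simp: X_def Y_def)
    qed
    then show ?thesis using emeasure_translate[OF Ys] by simp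
  qed
  have "emeasure lborel (P \<inter> D) = (\<integral>\<^sup>+k. emeasure lborel (X k) \<partial>count_space ?Z)"
    unfolding PD by (rule emeasure_UN_countable[OF Xs countable_Z dX])
  also have "\<dots> = (\<integral>\<^sup>+k. emeasure lborel (Y k) \<partial>count_space ?Z)"
    by (rule nn_integral_cong) (simp add: XY)
  also have "\<dots> = emeasure lborel (P \<inter> unit_cube)"
    unfolding PC by (rule emeasure_UN_countable[OF Ys countable_Z dY, symmetric])
  finally show ?thesis .
qed

lemma of_int_mat_mult: "of_int_mat (A ** B) = of_int_mat A ** of_int_mat B"
  by (simp add: of_int_mat_def matrix_matrix_mult_def vec_eq_iff)

lemma of_int_mat_1: "of_int_mat (mat 1) = mat 1"
  by (simp add: of_int_mat_def mat_def vec_eq_iff)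

lemma det_of_int_mat: "det (of_int_mat A) = of_int (det A)"
  by (simp add: det_2 of_int_mat_def)

lemma lin_lift_comp: "lin_lift A (lin_lift B x) = lin_lift (A ** B) x"
  by (simp add: lin_lift_def of_int_mat_mult matrix_vector_mul_assoc)

lemma lin_lift_id: "A ** B = mat 1 \<Longrightarrow> lin_lift A (lin_lift B x) = x"
  by (simp only: lin_lift_comp) (simp add: lin_lift_def of_int_mat_1)

lemma linear_lin_lift: "linear (lin_lift A)"
  unfolding lin_lift_def by (rule matrix_vector_mul_linear)

lemma lin_lift_add: "lin_lift A (x + y) = lin_lift A x + lin_lift A y"
  by (simp add: lin_lift_def matrix_vector_right_distrib)
lemma lin_lift_diff: "lin_lift A (x - y) = lin_lift A x - lin_lift A y"
  by (simp add: lin_lift_def matrix_vector_mult_diff_distrib)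

lemma int_vec_lin_lift: "int_vec k \<Longrightarrow> int_vec (lin_lift A k)"
  by (auto simp: int_vec_def lin_lift_def of_int_mat_def matrix_vector_mult_def sum_2)

lemma lin_lift_borel: "lin_lift A \<in> borel_measurable borel"
  by (rule borel_measurable_continuous_onI, rule linear_continuous_on)
    (simp add: linear_lin_lift linear_conv_bounded_linear[symmetric])

lemma continuous_lin_lift: "continuous_on S (lin_lift A)"
  by (rule linear_continuous_on) (simp add: linear_lin_lift linear_conv_bounded_linear[symmetric])

lemma bounded_cube: "bounded unit_cube"
  unfolding bounded_iff using norm_cube by blast

lemma lin_area:
  assumes BB: "B ** Bi = mat 1" "Bi ** B = mat 1" and dB: "det B = 1 \<or> det B = -1"
  shows "area_preserving (lin_lift B)"
  unfolding area_preserving_def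
proof safe
  fix E assume E: "E \<in> sets lborel" "periodic_set E"
  note [measurable] = E(1) cube_borel lin_lift_borel
  define S where "S = {x. lin_lift B x \<in> E} \<inter> unit_cube"
  define D where "D = {y. lin_lift Bi y \<in> unit_cube}"
  have Ss[measurable]: "S \<in> sets lborel" unfolding S_def by measurable
  have Ds[measurable]: "D \<in> sets lborel" unfolding D_def by measurable
  have bS: "bounded S" using bounded_cube by (auto simp: S_def intro: bounded_subset)
  have img: "lin_lift B ` S = E \<inter> D"
  proof safe
    fix x assume "x \<in> S" then show "lin_lift B x \<in> E" "lin_lift B x \<in> D"
      by (auto simp: S_def D_def lin_lift_id[OF BB(2)])
  next
    fix y assume y: "y \<in> E" "y \<in> D"
    have "y = lin_lift B (lin_lift Bi y)" by (simp add: lin_lift_id[OF BB(1)])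
    moreover have "lin_lift Bi y \<in> S" using y by (auto simp: S_def D_def lin_lift_id[OF BB(1)])
    ultimately show "y \<in> lin_lift B ` S" by blast
  qed
  have bED: "bounded (E \<inter> D)" unfolding img[symmetric]
    by (rule bounded_linear_image[OF bS]) (simp add: linear_lin_lift linear_conv_bounded_linear[symmetric])
  have Sl: "S \<in> lmeasurable" by (rule bounded_set_imp_lmeasurable[OF bS]) (use Ss in \<open>simp add: sets_completionI_sets\<close>)
  have "measure lebesgue (lin_lift B ` S) = \<bar>det (matrix (lin_lift B))\<bar> * measure lebesgue S"
    by (rule measure_linear_image[OF linear_lin_lift Sl])
  also have "\<bar>det (matrix (lin_lift B))\<bar> = 1"
    using dB by (auto simp: lin_lift_def[abs_def] det_of_int_mat)
  finally have meq0: "measure lebesgue (E \<inter> D) = measure lebesgue S"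
    using img by simp
  have EDs: "E \<inter> D \<in> sets lborel" by measurable
  have meq: "measure lborel (E \<inter> D) = measure lborel S"
    using meq0 measure_completion[OF EDs] measure_completion[OF Ss] by metis
  have "emeasure lborel ({x. lin_lift B x \<in> E} \<inter> unit_cube) = emeasure lborel S" by (simp add: S_def)
  also have "\<dots> = ennreal (measure lborel S)"
    using emeasure_bounded_finite[OF bS] by (simp add: emeasure_eq_ennreal_measure)
  also have "\<dots> = ennreal (measure lborel (E \<inter> D))" by (simp add: meq)
  also have "\<dots> = emeasure lborel (E \<inter> D)"
    using emeasure_bounded_finite[OF bED] by (simp add: emeasure_eq_ennreal_measure)
  also have "\<dots> = emeasure lborel (E \<inter> unit_cube)"
  proof (rule fundamental_domain[OF Ds _ _ E])
    fix x
    obtain m where m: "int_vec m" "lin_lift Bi x + m \<in> unit_cube" using cube_shift_ex by blast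
    have "lin_lift Bi (x + lin_lift B m) = lin_lift Bi x + m"
      by (simp add: lin_lift_add lin_lift_id[OF BB(2)])
    then show "\<exists>k. int_vec k \<and> x + k \<in> D"
      using m int_vec_lin_lift[OF m(1), of B] unfolding D_def by (intro exI[of _ "lin_lift B m"]) simp
  next
    fix x k k' assume k: "int_vec k" "int_vec k'" "x + k \<in> D" "x + k' \<in> D"
    let ?y = "lin_lift Bi x + lin_lift Bi k"
    have "?y \<in> unit_cube" "?y + (lin_lift Bi k' - lin_lift Bi k) \<in> unit_cube"
      using k by (auto simp: D_def lin_lift_add)
    then have "lin_lift Bi k' - lin_lift Bi k = 0"
      using cube_unique int_vec_diff int_vec_lin_lift k(1,2) by blast
    then have "lin_lift B (lin_lift Bi k) = lin_lift B (lin_lift Bi k')" by simp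
    then show "k = k'" by (simp add: lin_lift_id[OF BB(1)])
  qed
  finally show "emeasure lborel ({x. lin_lift B x \<in> E} \<inter> unit_cube) = emeasure lborel (E \<inter> unit_cube)" .
qed

lemma lin_lift_nth: "lin_lift B x $ i = of_int (B$i$1) * x$1 + of_int (B$i$2) * x$2"
  by (simp add: lin_lift_def of_int_mat_def matrix_vector_mult_def sum_2)

lemma fd_lin: "frechet_derivative (lin_lift B) (at x) = lin_lift B"
  using frechet_derivative_at[OF linear_imp_has_derivative[OF linear_lin_lift]] by simp

lemma linear_funpow: "linear (L::'a::real_vector \<Rightarrow> 'a) \<Longrightarrow> linear (L ^^ n)"
proof (induction n)
  case (Suc n) then show ?case using linear_compose[of "L^^n" L] by (simp add: o_def)
qed (simp add: linear_id)

lemma fd_funpow_lin: "frechet_derivative (lin_lift B ^^ n) (at x) = lin_lift B ^^ n"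
  using frechet_derivative_at[OF linear_imp_has_derivative[OF linear_funpow[OF linear_lin_lift]]] by simp

lemma funpow_eig:
  assumes "linear L" "L v = c *\<^sub>R v"
  shows "(L ^^ n) (k *\<^sub>R v) = (k * c ^ n) *\<^sub>R v"
proof (induction n)
  case (Suc n)
  have "(L ^^ Suc n) (k *\<^sub>R v) = L ((k * c ^ n) *\<^sub>R v)" using Suc by simp
  also have "\<dots> = (k * c ^ n) *\<^sub>R (c *\<^sub>R v)" by (simp add: linear_scale[OF assms(1)] assms(2))
  finally show ?case by (simp add: mult.assoc mult.commute)
qed simp

lemma image_eig:
  assumes "linear L" "L v = c *\<^sub>R v" "c \<noteq> 0"
  shows "L ` span {v} = span {v}"
proof -
  have 1: "L (k *\<^sub>R v) = (k * c) *\<^sub>R v" for k by (simp add: linear_scale[OF assms(1)] assms(2))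
  have 2: "k *\<^sub>R v = L ((k / c) *\<^sub>R v)" for k using assms(3) by (simp add: linear_scale[OF assms(1)] assms(2))
  show ?thesis unfolding span_singleton
  proof safe
    fix k show "L (k *\<^sub>R v) \<in> range (\<lambda>k. k *\<^sub>R v)" unfolding 1 by blast
  next
    fix k show "k *\<^sub>R v \<in> L ` range (\<lambda>k. k *\<^sub>R v)" using 2[of k] by blast
  qed
qed

lemma teq_refl[simp]: "teq x x" by (simp add: teq_def)

lemma lin_good:
  fixes A B Bi :: "int^2^2"
  assumes BB: "B ** Bi = mat 1" "Bi ** B = mat 1" and rev: "A ** B = Bi ** A"
    and dB: "det B = 1" and tr: "B$1$1 + B$2$2 \<ge> 3"
  shows "good_map A (lin_lift B) (lin_lift Bi)"
proof -
  have lin: "linear (lin_lift B)" "linear (lin_lift Bi)" by (rule linear_lin_lift)+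
  have diffeo: "torus_diffeo (lin_lift B) (lin_lift Bi)"
    unfolding torus_diffeo_def descends_def C1_map_def
  proof (intro conjI allI impI)
    fix x k :: "real^2" assume "int_vec k"
    then show "int_vec (lin_lift B (x + k) - lin_lift B x)" "int_vec (lin_lift Bi (x + k) - lin_lift Bi x)"
      by (simp_all add: lin_lift_add int_vec_lin_lift)
  next
    fix x show "lin_lift B differentiable at x" "lin_lift Bi differentiable at x"
      using linear_imp_has_derivative[OF lin(1)] linear_imp_has_derivative[OF lin(2)]
      by (auto simp: differentiable_def)
  next
    show "continuous_on UNIV (\<lambda>x. matrix (frechet_derivative (lin_lift B) (at x)))"
      "continuous_on UNIV (\<lambda>x. matrix (frechet_derivative (lin_lift Bi) (at x)))"
      by (simp_all add: fd_lin)
  next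
    fix x show "lin_lift Bi (lin_lift B x) = x" "lin_lift B (lin_lift Bi x) = x"
      by (simp_all add: lin_lift_id BB)
  qed
  have rv: "reversible A (lin_lift B) (lin_lift Bi)"
    unfolding reversible_def by (simp add: lin_lift_comp rev)
  have ar: "area_preserving (lin_lift B)" using lin_area[OF BB] dB by simp
  define b11 where "b11 = real_of_int (B$1$1)"
  define b12 where "b12 = real_of_int (B$1$2)"
  define b21 where "b21 = real_of_int (B$2$1)"
  define b22 where "b22 = real_of_int (B$2$2)"
  define T where "T = b11 + b22"
  have det: "b11 * b22 - b12 * b21 = 1"
    using dB unfolding b11_def b12_def b21_def b22_def det_2
    by (metis of_int_1 of_int_diff of_int_mult)
  have T3: "T \<ge> 3" using tr unfolding T_def b11_def b22_def by linarith
  have b12: "b12 \<noteq> 0"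
  proof
    assume "b12 = 0"
    then have "B$1$2 = 0" by (simp add: b12_def)
    then have "B$1$1 * B$2$2 = 1" using dB by (simp add: det_2)
    then have "B$1$1 + B$2$2 \<le> 2" by (auto simp: zmult_eq_1_iff)
    then show False using tr by simp
  qed
  define s where "s = sqrt (T^2 - 4)"
  have TT: "T * T \<ge> 3 * 3" using T3 by (intro mult_mono) auto
  have s0: "s > 0" "s^2 = T^2 - 4" using TT by (simp_all add: s_def power2_eq_square)
  have sT: "s < T"
  proof -
    have "s < sqrt (T^2)" unfolding s_def by (rule real_sqrt_less_mono) simp
    then show ?thesis using T3 by simp
  qed
  define \<mu> where "\<mu> = (T + s) / 2"
  define \<nu> where "\<nu> = (T - s) / 2"
  have mn: "\<mu> * \<nu> = 1" "\<mu> + \<nu> = T"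
    unfolding \<mu>_def \<nu>_def using s0 by (simp_all add: field_simps power2_eq_square)
  have mu1: "\<mu> > 1" using T3 s0 by (simp add: \<mu>_def)
  have nu0: "0 < \<nu>" using sT by (simp add: \<nu>_def)
  have nu: "0 < \<nu>" "\<nu> < 1"
  proof (rule nu0, rule ccontr)
    assume "\<not> \<nu> < 1"
    then have "\<mu> * 1 \<le> \<mu> * \<nu>" using mu1 by (intro mult_left_mono) auto
    then show False using mn mu1 by simp
  qed
  have nmu: "\<nu> \<noteq> \<mu>" using nu mu1 by simp
  define eu :: "real^2" where "eu = vector [b12, \<mu> - b11]"
  define es :: "real^2" where "es = vector [b12, \<nu> - b11]"
  have eig: "lin_lift B (vector [b12, c - b11]) = c *\<^sub>R vector [b12, c - b11]"
    if c: "c * c = T * c - 1" for c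
  proof -
    have "b21 * b12 + b22 * (c - b11) = c * (c - b11)"
      using c det unfolding T_def by (simp add: algebra_simps)
    then show ?thesis
      by (simp add: vec_eq_iff forall_2 lin_lift_nth b11_def b12_def b21_def b22_def[symmetric] algebra_simps)
  qed
  have q1: "\<mu> * \<mu> = T * \<mu> - 1"
  proof -
    have "T * \<mu> = (\<mu> + \<nu>) * \<mu>" using mn(2) by simp
    also have "\<dots> = \<mu> * \<mu> + \<mu> * \<nu>" by (simp add: algebra_simps)
    finally show ?thesis using mn(1) by simp
  qed
  have q2: "\<nu> * \<nu> = T * \<nu> - 1"
  proof -
    have "T * \<nu> = (\<mu> + \<nu>) * \<nu>" using mn(2) by simp
    also have "\<dots> = \<nu> * \<nu> + \<mu> * \<nu>" by (simp add: algebra_simps)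
    finally show ?thesis using mn(1) by simp
  qed
  have Beu: "lin_lift B eu = \<mu> *\<^sub>R eu" unfolding eu_def
    by (rule eig[OF q1])
  have Bes: "lin_lift B es = \<nu> *\<^sub>R es" unfolding es_def
    by (rule eig[OF q2])
  have Bieu: "lin_lift Bi eu = \<nu> *\<^sub>R eu"
  proof -
    have "eu = lin_lift Bi (lin_lift B eu)" by (simp add: lin_lift_id BB)
    also have "\<dots> = \<mu> *\<^sub>R lin_lift Bi eu" by (simp add: Beu linear_scale[OF lin(2)])
    finally have "\<nu> *\<^sub>R eu = \<nu> *\<^sub>R (\<mu> *\<^sub>R lin_lift Bi eu)" by (rule arg_cong)
    then have "\<nu> *\<^sub>R eu = (\<nu> * \<mu>) *\<^sub>R lin_lift Bi eu" by simp
    then show ?thesis using mn by (simp add: mult.commute)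
  qed
  have anos: "anosov (lin_lift B) (lin_lift Bi)"
    unfolding anosov_def
  proof (rule exI[of _ 1], rule exI[of _ \<nu>], rule exI[of _ "\<lambda>_. span {es}"], rule exI[of _ "\<lambda>_. span {eu}"], intro conjI allI impI)
    show "0 < \<nu>" "\<nu> < 1" by (rule nu)+
  next
    fix x
    show "span {es} \<inter> span {eu} = {0}"
    proof safe
      fix v assume v: "v \<in> span {es}" "v \<in> span {eu}"
      obtain k where k: "v = k *\<^sub>R es" using v(1) by (auto simp: span_singleton)
      obtain l where l: "v = l *\<^sub>R eu" using v(2) by (auto simp: span_singleton)
      note kl = k l
      then have "k * b12 = l * b12" "k * (\<nu> - b11) = l * (\<mu> - b11)"
        by (auto simp: vec_eq_iff forall_2 es_def eu_def)
      then have "k = l" "k * \<nu> = k * \<mu>" using b12 by (auto simp: algebra_simps)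
      then have "k = 0" using nmu by simp
      then show "v = 0" using kl by simp
    qed (simp_all add: span_zero)
  next
    fix x
    show "{a + b |a b. a \<in> span {es} \<and> b \<in> span {eu}} = UNIV"
    proof safe
      fix w :: "real^2"
      define s1 where "s1 = w$1 / b12"
      define r where "r = w$2 + b11 * s1"
      define l where "l = (r - s1 * \<nu>) / (\<mu> - \<nu>)"
      define k where "k = s1 - l"
      have "w = k *\<^sub>R es + l *\<^sub>R eu"
      proof -
        have "l * (\<mu> - \<nu>) = r - s1 * \<nu>" unfolding l_def using nmu by simp
        moreover have "s1 * b12 = w$1" unfolding s1_def using b12 by simp
        ultimately show ?thesis
          by (simp add: vec_eq_iff forall_2 es_def eu_def k_def r_def algebra_simps)
      qed
      then show "\<exists>a b. w = a + b \<and> a \<in> span {es} \<and> b \<in> span {eu}"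
        by (auto simp: span_singleton)
    qed simp
  next
    fix x
    show "frechet_derivative (lin_lift B) (at x) ` span {es} = span {es}"
      "frechet_derivative (lin_lift B) (at x) ` span {eu} = span {eu}"
      unfolding fd_lin using image_eig[OF lin(1) Bes] image_eig[OF lin(1) Beu] nu mu1 by auto
  next
    fix x n v assume "v \<in> span {es}"
    then obtain k where k: "v = k *\<^sub>R es" by (auto simp: span_singleton)
    show "norm (frechet_derivative (lin_lift B ^^ n) (at x) v) \<le> 1 * \<nu> ^ n * norm v"
      unfolding fd_funpow_lin k funpow_eig[OF lin(1) Bes] using nu by (simp add: abs_mult)
  next
    fix x n v assume "v \<in> span {eu}"
    then obtain k where k: "v = k *\<^sub>R eu" by (auto simp: span_singleton)
    show "norm (frechet_derivative (lin_lift Bi ^^ n) (at x) v) \<le> 1 * \<nu> ^ n * norm v"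
      unfolding fd_funpow_lin k funpow_eig[OF lin(2) Bieu] using nu by (simp add: abs_mult)
  qed (auto simp: subspace_span)
  show ?thesis unfolding good_map_def using diffeo ar rv anos by blast
qed

lemma sq_ge1: "(c::int) \<noteq> 0 \<Longrightarrow> 1 \<le> c * c"
proof -
  assume "c \<noteq> 0"
  then have "1 \<le> \<bar>c\<bar>" by linarith
  then have "1 * 1 \<le> \<bar>c\<bar> * \<bar>c\<bar>" by (intro mult_mono) auto
  then show ?thesis by (simp add: abs_mult_self_eq)
qed
lemma aux_b0: "(a::int) * b + b * d = 0 \<Longrightarrow> a + d \<noteq> 0 \<Longrightarrow> b = 0"
  by (metis distrib_left mult_eq_0_iff mult.commute)
lemma aux_c0: "(c::int) * a + d * c = 0 \<Longrightarrow> a + d \<noteq> 0 \<Longrightarrow> c = 0"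
  by (metis distrib_left mult_eq_0_iff mult.commute add.commute)

lemma exN:
  fixes a b c :: int
  assumes "a * a + b * c = 1"
  shows "\<exists>p q r. p * p + q * r = 1 \<and> 2 * a * p + b * r + c * q \<ge> 3"
proof (cases "c = 0")
  case False
  define k where "k = \<bar>2 * a\<bar> + 3"
  have "c * c \<ge> 1" using False by (rule sq_ge1)
  then have "c * c * k \<ge> 1 * k" using k_def by (intro mult_right_mono) auto
  then have "2 * a * 1 + b * 0 + c * (c * k) \<ge> 3" unfolding k_def by (simp add: algebra_simps)
  then show ?thesis by (intro exI[of _ 1] exI[of _ "c * k"] exI[of _ 0]) simp
next
  case c: True
  show ?thesis
  proof (cases "b = 0")
    case False
    define k where "k = \<bar>2 * a\<bar> + 3"
    have "b * b \<ge> 1" using False by (rule sq_ge1)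
    then have "b * b * k \<ge> 1 * k" using k_def by (intro mult_right_mono) auto
    then have "2 * a * 1 + b * (b * k) + c * 0 \<ge> 3" unfolding k_def by (simp add: algebra_simps)
    then show ?thesis by (intro exI[of _ 1] exI[of _ 0] exI[of _ "b * k"]) simp
  next
    case True
    then have "a * a = 1" using assms c by simp
    then show ?thesis using c True
      by (intro exI[of _ "2 * a"] exI[of _ 3] exI[of _ "-1"]) (simp add: algebra_simps)
  qed
qed

lemma mat2_eq: "(M::'a^2^2) = P \<longleftrightarrow> M$1$1 = P$1$1 \<and> M$1$2 = P$1$2 \<and> M$2$1 = P$2$1 \<and> M$2$2 = P$2$2"
  by (auto simp: vec_eq_iff forall_2)

lemma mmult_nth: "((M::'a::semiring_1^2^2) ** P) $ i $ j = M$i$1 * P$1$j + M$i$2 * P$2$j"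
  by (simp add: matrix_matrix_mult_def sum_2)

lemma A_props:
  fixes A :: "int^2^2"
  assumes "A ** A = mat 1" "A \<noteq> mat 1" "A \<noteq> - mat 1"
  shows "A$2$2 = - A$1$1" "A$1$1 * A$1$1 + A$1$2 * A$2$1 = 1"
proof -
  let ?a = "A$1$1" and ?b = "A$1$2" and ?c = "A$2$1" and ?d = "A$2$2"
  have e: "?a * ?a + ?b * ?c = 1" "?a * ?b + ?b * ?d = 0" "?c * ?a + ?d * ?c = 0" "?c * ?b + ?d * ?d = 1"
    using assms(1) unfolding mat2_eq mmult_nth by (simp_all add: mat_def)
  show "?d = - ?a"
  proof (rule ccontr)
    assume ne: "?d \<noteq> - ?a"
    then have "?a + ?d \<noteq> 0" by simp
    then have bc: "?b = 0" "?c = 0" using e(2,3) aux_b0 aux_c0 by blast+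
    then have "?a * ?a = 1" "?d * ?d = 1" using e by auto
    then have "(?a = 1 \<or> ?a = -1) \<and> (?d = 1 \<or> ?d = -1)" by (auto simp: zmult_eq_1_iff)
    then have "?a = ?d \<and> (?a = 1 \<or> ?a = -1)" using ne by auto
    then have "A = mat 1 \<or> A = - mat 1" using bc unfolding mat2_eq by (auto simp: mat_def)
    then show False using assms by blast
  qed
  show "?a * ?a + ?b * ?c = 1" by (rule e(1))
qed

lemma exists_good:
  fixes A :: "int^2^2"
  assumes "A ** A = mat 1" "A \<noteq> mat 1" "A \<noteq> - mat 1"
  shows "\<exists>F G. good_map A F G"
proof -
  note ap = A_props[OF assms]
  obtain p q r where pqr: "p * p + q * r = 1" "2 * A$1$1 * p + A$1$2 * r + A$2$1 * q \<ge> 3"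
    using exN[OF ap(2)] by blast
  define N :: "int^2^2" where "N = vector [vector [p, q], vector [r, -p]]"
  have NN: "N ** N = mat 1" unfolding mat2_eq mmult_nth using pqr(1)
    by (simp add: N_def mat_def algebra_simps)
  define B where "B = A ** N"
  define Bi where "Bi = N ** A"
  have 1: "B ** Bi = mat 1"
  proof -
    have "B ** Bi = A ** (N ** N) ** A" unfolding B_def Bi_def by (simp add: matrix_mul_assoc)
    then show ?thesis by (simp add: NN matrix_mul_rid assms(1))
  qed
  have 2: "Bi ** B = mat 1"
  proof -
    have "Bi ** B = N ** (A ** A) ** N" unfolding B_def Bi_def by (simp add: matrix_mul_assoc)
    then show ?thesis by (simp add: NN matrix_mul_rid assms(1))
  qed
  have 3: "A ** B = Bi ** A"
  proof -
    have "A ** B = (A ** A) ** N" "Bi ** A = N ** (A ** A)" unfolding B_def Bi_def by (simp_all add: matrix_mul_assoc)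
    then show ?thesis by (simp add: matrix_mul_rid matrix_mul_lid assms(1))
  qed
  have dA: "det A = -1" using ap by (simp add: det_2 algebra_simps)
  have dN: "det N = -1" using pqr(1) by (simp add: det_2 N_def algebra_simps)
  have 4: "det B = 1" unfolding B_def det_mul dA dN by simp
  have 5: "B$1$1 + B$2$2 \<ge> 3" unfolding B_def mmult_nth using pqr(2) ap(1)
    by (simp add: N_def algebra_simps)
  show ?thesis using lin_good[OF 1 2 3 4 5] by blast
qed

lemma hd_shift1:
  fixes h :: "real^2 \<Rightarrow> real^2"
  assumes "(h has_derivative D) (at (x + c))"
  shows "((\<lambda>x. h (x + c) + d) has_derivative D) (at x)"
proof -
  have "((\<lambda>y. y + c) has_derivative (\<lambda>v. v)) (at x)"
    by (auto intro!: derivative_eq_intros)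
  from has_derivative_compose[OF this assms] have "((\<lambda>y. h (y + c)) has_derivative D) (at x)" by simp
  then show ?thesis by (auto intro!: derivative_eq_intros)
qed

lemma hd_shift_iff:
  fixes h :: "real^2 \<Rightarrow> real^2"
  shows "((\<lambda>x. h (x + c) + d) has_derivative D) (at x) \<longleftrightarrow> (h has_derivative D) (at (x + c))"
proof
  assume "((\<lambda>x. h (x + c) + d) has_derivative D) (at x)"
  then have "((\<lambda>y. (\<lambda>x. h (x + c) + d) (y + (- c)) + (- d)) has_derivative D) (at (x + c))"
    using hd_shift1[of "\<lambda>x. h (x + c) + d" D "x + c" "-c" "-d"] by simp
  then show "(h has_derivative D) (at (x + c))" by simp
qed (rule hd_shift1)

lemma fd_shift:
  fixes h :: "real^2 \<Rightarrow> real^2"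
  shows "frechet_derivative (\<lambda>x. h (x + c) + d) (at x) = frechet_derivative h (at (x + c))"
  unfolding frechet_derivative_def hd_shift_iff ..

lemma diff_shift:
  fixes h :: "real^2 \<Rightarrow> real^2"
  shows "(\<lambda>x. h (x + c) + d) differentiable (at x) \<longleftrightarrow> h differentiable (at (x + c))"
  unfolding differentiable_def hd_shift_iff ..

lemma unif_periodic:
  fixes f :: "real^2 \<Rightarrow> 'b::real_normed_vector"
  assumes cf: "continuous_on UNIV f" and per: "\<And>x y k. int_vec k \<Longrightarrow> f (x + k) - f x = f (y + k) - f y"
    and e: "e > 0"
  shows "\<exists>d>0. \<forall>x y. dist x y < d \<longrightarrow> dist (f x) (f y) < e"
proof -
  have "uniformly_continuous_on (cball 0 3) f"
    by (rule compact_uniformly_continuous[OF continuous_on_subset[OF cf]]) auto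
  then obtain d' where d': "d' > 0" "\<And>x x'. x \<in> cball 0 3 \<Longrightarrow> x' \<in> cball 0 3 \<Longrightarrow> dist x' x < d' \<Longrightarrow> dist (f x') (f x) < e"
    using e unfolding uniformly_continuous_on_def by metis
  show ?thesis
  proof (intro exI[of _ "min d' 1"] conjI allI impI)
    show "min d' 1 > 0" using d' by simp
    fix x y :: "real^2" assume xy: "dist x y < min d' 1"
    obtain m where m: "int_vec m" "x + m \<in> unit_cube" using cube_shift_ex by blast
    have nx: "norm (x + m) \<le> 2" using norm_cube[OF m(2)] .
    have dxy: "dist (y + m) (x + m) = dist x y" by (simp add: dist_norm norm_minus_commute)
    have "norm (y + m) \<le> norm (x + m) + dist (y + m) (x + m)"
      by (metis dist_norm norm_triangle_sub add.commute)
    then have ny: "norm (y + m) \<le> 3" using nx dxy xy by simp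
    have "dist (f (y + m)) (f (x + m)) < e"
      using d'(2)[of "x + m" "y + m"] nx ny dxy xy by simp
    moreover have "f x - f y = f (x + m) - f (y + m)" using per[OF m(1), of x y] by (simp add: algebra_simps)
    ultimately show "dist (f x) (f y) < e" by (simp add: dist_norm norm_minus_commute)
  qed
qed

lemma diffeo_cont: "torus_diffeo F G \<Longrightarrow> continuous_on UNIV F"
  unfolding torus_diffeo_def C1_map_def
  by (intro differentiable_imp_continuous_on) (simp add: differentiable_on_def)

lemma diffeo_cont2: "torus_diffeo F G \<Longrightarrow> continuous_on UNIV G"
  unfolding torus_diffeo_def C1_map_def
  by (intro differentiable_imp_continuous_on) (simp add: differentiable_on_def)

lemma descends_const:
  assumes "descends F" "continuous_on UNIV F" "int_vec k"
  shows "F (x + k) - F x = F (y + k) - F y"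
proof -
  define g where "g x = F (x + k) - F x" for x
  have cg: "continuous_on UNIV g"
    unfolding g_def by (intro continuous_intros continuous_on_compose2[OF assms(2)]) auto
  have "g x = g y" using const_int_valued[OF connected_UNIV cg, of y x] assms by (auto simp: descends_def g_def)
  then show ?thesis by (simp add: g_def)
qed

lemma fd_periodic:
  assumes "descends F" "continuous_on UNIV F" "int_vec k"
  shows "frechet_derivative F (at (x + k)) = frechet_derivative F (at x)"
proof -
  define K where "K = F k - F 0"
  have eq: "(\<lambda>y. F (y + k) + 0) = (\<lambda>y. F (y + 0) + K)"
    using descends_const[OF assms, of _ 0] by (auto simp: K_def fun_eq_iff algebra_simps)
  have "frechet_derivative F (at (x + k)) = frechet_derivative (\<lambda>y. F (y + k) + 0) (at x)"
    by (rule fd_shift[symmetric])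
  also have "\<dots> = frechet_derivative (\<lambda>y. F (y + 0) + K) (at x)" by (simp only: eq)
  also have "\<dots> = frechet_derivative F (at x)" using fd_shift[of F 0 K x] by simp
  finally show ?thesis .
qed

lemma fd_translate:
  assumes P: "P \<in> sets lborel" "periodic_set P"
  shows "emeasure lborel (P \<inter> {y. y + c \<in> unit_cube}) = emeasure lborel (P \<inter> unit_cube)"
proof (rule fundamental_domain[OF _ _ _ P])
  show "{y. y + c \<in> unit_cube} \<in> sets lborel" using cube_borel by measurable
next
  fix x obtain m where "int_vec m" "x + c + m \<in> unit_cube" using cube_shift_ex by blast
  then show "\<exists>k. int_vec k \<and> x + k \<in> {y. y + c \<in> unit_cube}"
    by (intro exI[of _ m]) (simp add: algebra_simps)
next
  fix x k k' assume k: "int_vec k" "int_vec k'" "x + k \<in> {y. y + c \<in> unit_cube}" "x + k' \<in> {y. y + c \<in> unit_cube}"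
  then have "x + k + c \<in> unit_cube" "(x + k + c) + (k' - k) \<in> unit_cube" by (simp_all add: algebra_simps)
  then have "k' - k = 0" using cube_unique int_vec_diff k(1,2) by blast
  then show "k = k'" by simp
qed

lemma funpow_shift:
  fixes F :: "real^2 \<Rightarrow> real^2"
  shows "((\<lambda>x. F (x + c) + - c) ^^ n) = (\<lambda>x. (F ^^ n) (x + c) + - c)"
  by (induction n) (auto simp: fun_eq_iff algebra_simps)

lemma conj_good:
  assumes good: "good_map A F G" and Ac: "lin_lift A c = c"
  shows "good_map A (\<lambda>x. F (x + c) + - c) (\<lambda>y. G (y + c) + - c)"
proof -
  define F' where "F' = (\<lambda>x. F (x + c) + - c)"
  define G' where "G' = (\<lambda>y. G (y + c) + - c)"
  from good have td: "torus_diffeo F G" and ar: "area_preserving F" and rv: "reversible A F G"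
    and an: "anosov F G" by (auto simp: good_map_def)
  have cF: "continuous_on UNIV F" by (rule diffeo_cont[OF td])
  have td': "torus_diffeo F' G'"
    unfolding torus_diffeo_def
  proof (intro conjI allI)
    have sw: "x + k + c = (x + c) + k" for x k :: "real^2" by (simp add: algebra_simps)
    have dF: "descends F" "descends G" using td by (auto simp: torus_diffeo_def)
    show "descends F'" "descends G'"
      unfolding descends_def F'_def G'_def sw using dF unfolding descends_def by auto
  next
    have tr: "continuous_on UNIV (\<lambda>x::real^2. x + c)" by (intro continuous_intros)
    have c1: "C1_map F" "C1_map G" using td by (auto simp: torus_diffeo_def)
    show "C1_map F'"
      unfolding C1_map_def F'_def diff_shift fd_shift
    proof (intro conjI allI)
      show "continuous_on UNIV (\<lambda>x. matrix (frechet_derivative F (at (x + c))))"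
        using continuous_on_compose2[OF conjunct2[OF c1(1)[unfolded C1_map_def]] tr] by simp
    qed (use c1 in \<open>auto simp: C1_map_def\<close>)
    show "C1_map G'"
      unfolding C1_map_def G'_def diff_shift fd_shift
    proof (intro conjI allI)
      show "continuous_on UNIV (\<lambda>x. matrix (frechet_derivative G (at (x + c))))"
        using continuous_on_compose2[OF conjunct2[OF c1(2)[unfolded C1_map_def]] tr] by simp
    qed (use c1 in \<open>auto simp: C1_map_def\<close>)
  next
    fix x show "G' (F' x) = x" "F' (G' x) = x" using td by (simp_all add: F'_def G'_def torus_diffeo_def)
  qed
  have ar': "area_preserving F'"
    unfolding area_preserving_def
  proof safe
    fix E assume E: "E \<in> sets lborel" "periodic_set E"
    note [measurable] = E(1) cube_borel
    have Fm[measurable]: "F \<in> borel_measurable borel" by (rule borel_measurable_continuous_onI[OF cF])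
    define E' where "E' = {y. y + (- c) \<in> E}"
    define Q where "Q = {z. F z \<in> E'}"
    have E'm: "E' \<in> sets lborel" unfolding E'_def by measurable
    have Qm: "Q \<in> sets lborel" unfolding Q_def E'_def by measurable
    have sw: "x + k - c = (x - c) + k" for x k :: "real^2" by (simp add: algebra_simps)
    have E'p: "periodic_set E'" using E(2) unfolding periodic_set_def E'_def by (simp add: sw)
    have Qp: "periodic_set Q" unfolding periodic_set_def
    proof (intro allI impI)
      fix x k :: "real^2" assume k: "int_vec k"
      then have K: "int_vec (F (x + k) - F x)" using td by (auto simp: torus_diffeo_def descends_def)
      have "F (x + k) = F x + (F (x + k) - F x)" by simp
      then show "x + k \<in> Q \<longleftrightarrow> x \<in> Q" unfolding Q_def using E'p K
        unfolding periodic_set_def by (metis mem_Collect_eq)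
    qed
    have "emeasure lborel ({x. F' x \<in> E} \<inter> unit_cube) = emeasure lborel {x. x + c \<in> Q \<inter> {y. y + (- c) \<in> unit_cube}}"
      by (rule arg_cong[where f="emeasure lborel"]) (auto simp: F'_def Q_def E'_def)
    also have "\<dots> = emeasure lborel (Q \<inter> {y. y + (- c) \<in> unit_cube})"
      by (rule emeasure_translate) (use Qm in measurable)
    also have "\<dots> = emeasure lborel (Q \<inter> unit_cube)" by (rule fd_translate[OF Qm Qp])
    also have "\<dots> = emeasure lborel (E' \<inter> unit_cube)"
      using ar E'm E'p unfolding area_preserving_def Q_def by blast
    also have "E' \<inter> unit_cube = {y. y + (- c) \<in> E \<inter> {z. z + c \<in> unit_cube}}"
      by (auto simp: E'_def)
    also have "emeasure lborel \<dots> = emeasure lborel (E \<inter> {z. z + c \<in> unit_cube})"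
      by (rule emeasure_translate) measurable
    also have "\<dots> = emeasure lborel (E \<inter> unit_cube)" by (rule fd_translate[OF E])
    finally show "emeasure lborel ({x. F' x \<in> E} \<inter> unit_cube) = emeasure lborel (E \<inter> unit_cube)" .
  qed
  have rv': "reversible A F' G'"
    unfolding reversible_def
  proof
    fix x
    have 1: "lin_lift A x + c = lin_lift A (x + c)" by (simp add: lin_lift_add Ac)
    have "teq (lin_lift A (F (x + c))) (G (lin_lift A (x + c)))" using rv by (simp add: reversible_def)
    then show "teq (lin_lift A (F' x)) (G' (lin_lift A x))"
      unfolding F'_def G'_def 1 by (simp add: lin_lift_diff Ac teq_def)
  qed
  have an': "anosov F' G'"
  proof -
    from an obtain C lam Es Eu where h1: "C > 0" "0 < lam" "lam < 1"
      and h4: "\<forall>x k. int_vec k \<longrightarrow> Es (x + k) = Es x \<and> Eu (x + k) = Eu x"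
      and h5: "\<forall>x. subspace (Es x) \<and> subspace (Eu x) \<and> Es x \<inter> Eu x = {0} \<and>
           {a + b | a b. a \<in> Es x \<and> b \<in> Eu x} = UNIV \<and>
           frechet_derivative F (at x) ` Es x = Es (F x) \<and>
           frechet_derivative F (at x) ` Eu x = Eu (F x) \<and>
           (\<forall>n v. v \<in> Es x \<longrightarrow>
              norm (frechet_derivative (F ^^ n) (at x) v) \<le> C * lam ^ n * norm v) \<and>
           (\<forall>n v. v \<in> Eu x \<longrightarrow>
              norm (frechet_derivative (G ^^ n) (at x) v) \<le> C * lam ^ n * norm v)"
      unfolding anosov_def by (elim exE conjE) blast
    show ?thesis unfolding anosov_def
    proof (rule exI[of _ C], rule exI[of _ lam], rule exI[of _ "\<lambda>x. Es (x + c)"], rule exI[of _ "\<lambda>x. Eu (x + c)"],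
        intro conjI allI impI)
      fix x k :: "real^2" assume k: "int_vec k"
      have e: "x + k + c = (x + c) + k" by (simp add: algebra_simps)
      show "Es (x + k + c) = Es (x + c)" "Eu (x + k + c) = Eu (x + c)"
        unfolding e using h4 k by blast+
    next
      fix x
      have sx: "F' x + c = F (x + c)" by (simp add: F'_def)
      note hx = h5[rule_format, of "x + c"]
      show "subspace (Es (x + c))" "subspace (Eu (x + c))" "Es (x + c) \<inter> Eu (x + c) = {0}"
        "{a + b |a b. a \<in> Es (x + c) \<and> b \<in> Eu (x + c)} = UNIV" using hx by blast+
      show "frechet_derivative F' (at x) ` Es (x + c) = Es (F' x + c)"
        "frechet_derivative F' (at x) ` Eu (x + c) = Eu (F' x + c)"
        unfolding sx unfolding F'_def fd_shift using hx by blast+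
      fix n v
      show "v \<in> Es (x + c) \<Longrightarrow> norm (frechet_derivative (F' ^^ n) (at x) v) \<le> C * lam ^ n * norm v"
        unfolding F'_def funpow_shift fd_shift using hx by blast
      show "v \<in> Eu (x + c) \<Longrightarrow> norm (frechet_derivative (G' ^^ n) (at x) v) \<le> C * lam ^ n * norm v"
        unfolding G'_def funpow_shift fd_shift using hx by blast
    qed (rule h1)+
  qed
  show ?thesis using td' ar' rv' an' unfolding good_map_def F'_def G'_def by blast
qed

lemma funpow_diff:
  fixes F :: "real^2 \<Rightarrow> real^2"
  assumes "\<And>x. F differentiable (at x)"
  shows "(F ^^ n) differentiable (at x)"
proof (induction n arbitrary: x)
  case 0 then show ?case by (simp add: id_def)
next
  case (Suc n)
  have "(F \<circ> (F ^^ n)) differentiable (at x)"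
    by (rule differentiable_chain_at[OF Suc assms])
  then show ?case by (simp add: o_def)
qed

lemma hd_fd: "f differentiable (at x) \<Longrightarrow> (f has_derivative frechet_derivative f (at x)) (at x)"
  using frechet_derivative_works by blast

lemma fd_comp:
  fixes F H :: "real^2 \<Rightarrow> real^2"
  assumes "H differentiable (at x)" "F differentiable (at (H x))"
  shows "frechet_derivative (\<lambda>y. F (H y)) (at x) = (\<lambda>v. frechet_derivative F (at (H x)) (frechet_derivative H (at x) v))"
  using frechet_derivative_compose[OF assms] by (simp add: o_def comp_def)

lemma dir_deriv:
  fixes H :: "real^2 \<Rightarrow> real^2"
  assumes dH: "H differentiable (at x)" and d: "d > 0"
    and eq: "\<And>t. \<bar>t\<bar> < d \<Longrightarrow> H (x + t *\<^sub>R p) = H x + t *\<^sub>R p"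
  shows "frechet_derivative H (at x) p = p"
proof -
  let ?D = "frechet_derivative H (at x)"
  have l: "((\<lambda>t::real. x + t *\<^sub>R p) has_derivative (\<lambda>s. s *\<^sub>R p)) (at 0)"
    by (auto intro!: derivative_eq_intros)
  have "((\<lambda>t. H (x + t *\<^sub>R p)) has_derivative (\<lambda>s. ?D (s *\<^sub>R p))) (at 0)"
    using has_derivative_compose[OF l, of H ?D] hd_fd[OF dH] by simp
  then have 1: "((\<lambda>t. H x + t *\<^sub>R p) has_derivative (\<lambda>s. ?D (s *\<^sub>R p))) (at 0)"
    by (rule has_derivative_transform_within_open[of _ _ _ _ "ball 0 d"]) (use d eq in auto)
  have 2: "((\<lambda>t. H x + t *\<^sub>R p) has_derivative (\<lambda>s. s *\<^sub>R p)) (at (0::real))"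
    by (auto intro!: derivative_eq_intros)
  have "(\<lambda>s. ?D (s *\<^sub>R p)) = (\<lambda>s. s *\<^sub>R p)" by (rule has_derivative_unique[OF 1 2])
  then show ?thesis by (metis scaleR_one)
qed

lemma lim_bound:
  fixes lam K a :: real
  assumes "0 < lam" "lam < 1" "\<And>n. a \<le> K * lam ^ n"
  shows "a \<le> 0"
proof -
  have "(\<lambda>n. K * lam ^ n) \<longlonglongrightarrow> K * 0"
    by (intro tendsto_mult tendsto_const LIMSEQ_power_zero) (use assms in auto)
  then have "a \<le> K * 0" by (rule LIMSEQ_le_const) (use assms in auto)
  then show ?thesis by simp
qed

lemma funpow_inv:
  fixes F G :: "'a \<Rightarrow> 'a"
  assumes "\<And>x. G (F x) = x"
  shows "(G ^^ n) ((F ^^ n) x) = x"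
proof (induction n arbitrary: x)
  case (Suc n)
  have g: "(G ^^ Suc n) z = (G ^^ n) (G z)" for z by (metis funpow_Suc_right comp_apply)
  have "(G ^^ Suc n) ((F ^^ Suc n) x) = (G ^^ n) (G (F ((F ^^ n) x)))"
    by (simp only: g) simp
  then show ?case using Suc assms by simp
qed simp

lemma no_commute:
  fixes F G :: "real^2 \<Rightarrow> real^2"
  assumes td: "torus_diffeo F G" and an: "anosov F G" and p: "p \<noteq> 0" and d: "\<delta> > 0"
    and comm: "\<And>t. \<bar>t\<bar> < \<delta> \<Longrightarrow> tmap_eq (\<lambda>x. F (x + t *\<^sub>R p) + - (t *\<^sub>R p)) F"
  shows False
proof -
  have cF: "continuous_on UNIV F" by (rule diffeo_cont[OF td])
  have dF: "\<And>x. F differentiable (at x)" and dG: "\<And>x. G differentiable (at x)"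
    and GF: "\<And>x. G (F x) = x" and FG: "\<And>x. F (G x) = x"
    using td by (auto simp: torus_diffeo_def C1_map_def)
  have a: "F (y + t *\<^sub>R p) = F y + t *\<^sub>R p" if t: "\<bar>t\<bar> < \<delta>" for y t
  proof -
    define g where "g s = F (y + s *\<^sub>R p) + - (s *\<^sub>R p) - F y" for s :: real
    have cg: "continuous_on (ball 0 \<delta>) g"
      unfolding g_def
      by (intro continuous_intros continuous_on_compose2[OF cF]) auto
    have iv: "int_vec (g s)" if "s \<in> ball 0 \<delta>" for s
      using comm[of s] that by (auto simp: tmap_eq_def teq_def g_def)
    have "g t = g 0" by (rule const_int_valued[OF connected_ball cg iv]) (use t d in auto)
    then have "F (y + t *\<^sub>R p) - t *\<^sub>R p = F y" by (simp add: g_def)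
    then show ?thesis by (simp add: diff_eq_eq)
  qed
  have b: "G (y + t *\<^sub>R p) = G y + t *\<^sub>R p" if t: "\<bar>t\<bar> < \<delta>" for y t
  proof -
    have "G (y + t *\<^sub>R p) = G (F (G y) + t *\<^sub>R p)" by (simp add: FG)
    also have "\<dots> = G (F (G y + t *\<^sub>R p))" by (simp add: a[OF t])
    finally show ?thesis by (simp add: GF)
  qed
  have an_n: "(F ^^ n) (y + t *\<^sub>R p) = (F ^^ n) y + t *\<^sub>R p" if t: "\<bar>t\<bar> < \<delta>" for y t n
    by (induction n) (simp_all add: a[OF t])
  have dFn: "\<And>x. (F ^^ n) differentiable (at x)" for n by (rule funpow_diff[OF dF])
  have dGn: "\<And>x. (G ^^ n) differentiable (at x)" for n by (rule funpow_diff[OF dG])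
  have Dp: "frechet_derivative (F ^^ n) (at x) p = p" for n x
    by (rule dir_deriv[OF dFn d an_n])
  have inv: "frechet_derivative (G ^^ n) (at ((F ^^ n) x)) (frechet_derivative (F ^^ n) (at x) v) = v" for n x v
  proof -
    have "frechet_derivative (\<lambda>y. (G ^^ n) ((F ^^ n) y)) (at x) = frechet_derivative (\<lambda>y. y) (at x)"
      by (simp add: funpow_inv GF)
    also have "\<dots> = (\<lambda>v. v)" using frechet_derivative_at[OF has_derivative_ident] by simp
    moreover have "frechet_derivative (\<lambda>y. (G ^^ n) ((F ^^ n) y)) (at x) =
      (\<lambda>v. frechet_derivative (G ^^ n) (at ((F ^^ n) x)) (frechet_derivative (F ^^ n) (at x) v))"
      by (rule fd_comp[OF dFn dGn])
    ultimately show ?thesis by metis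
  qed
  have lin: "linear (frechet_derivative (F ^^ n) (at x))" for n x
    using has_derivative_linear[OF hd_fd[OF dFn]] .
  from an obtain C lam Es Eu where h1: "C > 0" "0 < lam" "lam < 1"
      and h5: "\<forall>x. subspace (Es x) \<and> subspace (Eu x) \<and> Es x \<inter> Eu x = {0} \<and>
           {a + b | a b. a \<in> Es x \<and> b \<in> Eu x} = UNIV \<and>
           frechet_derivative F (at x) ` Es x = Es (F x) \<and>
           frechet_derivative F (at x) ` Eu x = Eu (F x) \<and>
           (\<forall>n v. v \<in> Es x \<longrightarrow>
              norm (frechet_derivative (F ^^ n) (at x) v) \<le> C * lam ^ n * norm v) \<and>
           (\<forall>n v. v \<in> Eu x \<longrightarrow>
              norm (frechet_derivative (G ^^ n) (at x) v) \<le> C * lam ^ n * norm v)"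
    unfolding anosov_def by (elim exE conjE) blast
  have imgU: "frechet_derivative F (at x) ` Eu x = Eu (F x)" for x using h5 by blast
  have bS: "norm (frechet_derivative (F ^^ n) (at x) v) \<le> C * lam ^ n * norm v" if "v \<in> Es x" for x n v
    using h5 that by blast
  have bU: "norm (frechet_derivative (G ^^ n) (at x) v) \<le> C * lam ^ n * norm v" if "v \<in> Eu x" for x n v
    using h5 that by blast
  have invU: "frechet_derivative (F ^^ n) (at x) u \<in> Eu ((F ^^ n) x)" if "u \<in> Eu x" for n x u
  proof (induction n)
    case 0
    have "frechet_derivative (\<lambda>y. y) (at x) = (\<lambda>v. v)"
      using frechet_derivative_at[OF has_derivative_ident] by simp
    then show ?case using that by (simp add: id_def)
  next
    case (Suc n)
    have "frechet_derivative (F ^^ Suc n) (at x) u = frechet_derivative F (at ((F ^^ n) x)) (frechet_derivative (F ^^ n) (at x) u)"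
      using fd_comp[OF dFn dF] by (simp add: o_def)
    also have "\<dots> \<in> Eu (F ((F ^^ n) x))" using imgU Suc by blast
    finally show ?case by (simp add: o_def)
  qed
  have "{a + b | a b. a \<in> Es 0 \<and> b \<in> Eu 0} = UNIV" using h5 by blast
  then have "p \<in> {a + b | a b. a \<in> Es 0 \<and> b \<in> Eu 0}" by simp
  then obtain s u where su: "p = s + u" "s \<in> Es 0" "u \<in> Eu 0" by blast
  let ?L = "\<lambda>n. frechet_derivative (F ^^ n) (at 0)"
  have pL: "p = ?L n s + ?L n u" for n
  proof -
    have "?L n (s + u) = ?L n s + ?L n u" by (rule linear_add[OF lin])
    then show ?thesis using Dp[of n 0] su(1) by simp
  qed
  have pow1: "lam ^ n \<le> 1" for n using h1 by (simp add: power_le_one)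
  have "norm u \<le> (C * (norm p + C * norm s)) * lam ^ n" for n
  proof -
    have "norm u = norm (frechet_derivative (G ^^ n) (at ((F ^^ n) 0)) (?L n u))" by (simp add: inv)
    also have "\<dots> \<le> C * lam ^ n * norm (?L n u)" by (rule bU[OF invU[OF su(3)]])
    also have "norm (?L n u) \<le> norm p + C * norm s"
    proof -
      have "?L n u = p - ?L n s" using pL[of n] by (simp add: algebra_simps)
      then have "norm (?L n u) \<le> norm p + norm (?L n s)" by (simp add: norm_triangle_ineq4)
      also have "norm (?L n s) \<le> C * lam ^ n * norm s" by (rule bS[OF su(2)])
      also have "\<dots> \<le> C * 1 * norm s" using pow1[of n] h1 by (intro mult_right_mono mult_left_mono) auto
      finally show ?thesis by simp
    qed
    then have "C * lam ^ n * norm (?L n u) \<le> C * lam ^ n * (norm p + C * norm s)"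
      using h1 by (intro mult_left_mono) auto
    finally show ?thesis by (simp add: algebra_simps)
  qed
  then have "norm u \<le> 0" by (intro lim_bound[OF h1(2,3)])
  then have u0: "u = 0" by simp
  have "norm p \<le> (C * norm p) * lam ^ n" for n
  proof -
    have "norm p = norm (?L n s)" using Dp[of n 0] su u0 by simp
    also have "\<dots> \<le> C * lam ^ n * norm s" by (rule bS[OF su(2)])
    finally show ?thesis using su u0 by (simp add: algebra_simps)
  qed
  then have "norm p \<le> 0" by (intro lim_bound[OF h1(2,3)])
  then show False using p by simp
qed

lemma fixed_vec:
  fixes A :: "int^2^2"
  assumes "A ** A = mat 1" "A \<noteq> mat 1" "A \<noteq> - mat 1"
  shows "\<exists>p. p \<noteq> 0 \<and> lin_lift A p = p"
proof -
  note ap = A_props[OF assms]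
  define a where "a = real_of_int (A$1$1)"
  define b where "b = real_of_int (A$1$2)"
  define c where "c = real_of_int (A$2$1)"
  have d: "real_of_int (A$2$2) = - a" using ap(1) by (simp add: a_def)
  have e: "a * a + b * c = 1" unfolding a_def b_def c_def using ap(2)
    by (metis of_int_1 of_int_add of_int_mult)
  show ?thesis
  proof (cases "b = 0 \<and> a = 1")
    case True
    show ?thesis
      by (intro exI[of _ "vector [2, c] :: real^2"])
        (use True d in \<open>auto simp: vec_eq_iff forall_2 lin_lift_nth a_def b_def c_def\<close>)
  next
    case False
    have ne: "(vector [b, 1 - a] :: real^2) \<noteq> 0" using False by (auto simp: vec_eq_iff forall_2)
    have "c * b + - a * (1 - a) = 1 - a" using e by (simp add: algebra_simps)
    then have "lin_lift A (vector [b, 1 - a]) = vector [b, 1 - a]"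
      using d by (auto simp: vec_eq_iff forall_2 lin_lift_nth a_def b_def c_def algebra_simps)
    then show ?thesis using ne by blast
  qed
qed

lemma perturb:
  fixes A :: "int^2^2"
  assumes good: "good_map A F G" and e: "\<epsilon> > 0" and p: "p \<noteq> 0" "lin_lift A p = p"
  shows "\<exists>F' G'. good_map A F' G' \<and> \<not> tmap_eq F' F \<and>
          (\<forall>x. norm (F' x - F x) < \<epsilon> \<and>
               norm (matrix (frechet_derivative F' (at x)) - matrix (frechet_derivative F (at x))) < \<epsilon>)"
proof -
  have td: "torus_diffeo F G" and an: "anosov F G" using good by (auto simp: good_map_def)
  have cF: "continuous_on UNIV F" by (rule diffeo_cont[OF td])
  have dsc: "descends F" using td by (simp add: torus_diffeo_def)
  have cM: "continuous_on UNIV (\<lambda>x. matrix (frechet_derivative F (at x)))"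
    using td by (simp add: torus_diffeo_def C1_map_def)
  obtain d1 where d1: "d1 > 0" "\<And>x y. dist x y < d1 \<Longrightarrow> dist (F x) (F y) < \<epsilon> / 2"
    using unif_periodic[OF cF descends_const[OF dsc cF], of "\<epsilon> / 2"] e by auto
  obtain d2 where d2: "d2 > 0" "\<And>x y. dist x y < d2 \<Longrightarrow>
      dist (matrix (frechet_derivative F (at x))) (matrix (frechet_derivative F (at y))) < \<epsilon>"
  proof -
    have per: "matrix (frechet_derivative F (at (x + k))) - matrix (frechet_derivative F (at x)) =
      matrix (frechet_derivative F (at (y + k))) - matrix (frechet_derivative F (at y))" if "int_vec k" for x y k
      using fd_periodic[OF dsc cF that] by simp
    from unif_periodic[OF cM per e] show ?thesis using that by blast
  qed
  define m where "m = min (min d1 d2) (\<epsilon> / 2)"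
  have m: "m > 0" using d1 d2 e by (simp add: m_def)
  define \<delta> where "\<delta> = m / norm p"
  have \<delta>: "\<delta> > 0" using m p by (simp add: \<delta>_def)
  obtain t where t: "\<bar>t\<bar> < \<delta>" "\<not> tmap_eq (\<lambda>x. F (x + t *\<^sub>R p) + - (t *\<^sub>R p)) F"
    using no_commute[OF td an p(1) \<delta>] by blast
  define c where "c = t *\<^sub>R p"
  have nc: "norm c < m"
  proof -
    have "norm c = \<bar>t\<bar> * norm p" by (simp add: c_def)
    also have "\<dots> < \<delta> * norm p" using t(1) p by (intro mult_strict_right_mono) auto
    also have "\<dots> = m" using p by (simp add: \<delta>_def)
    finally show ?thesis .
  qed
  have Ac: "lin_lift A c = c" by (simp add: c_def linear_scale[OF linear_lin_lift] p(2))
  show ?thesis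
  proof (rule exI[of _ "\<lambda>x. F (x + c) + - c"], rule exI[of _ "\<lambda>y. G (y + c) + - c"], intro conjI allI)
    show "good_map A (\<lambda>x. F (x + c) + - c) (\<lambda>y. G (y + c) + - c)" by (rule conj_good[OF good Ac])
    show "\<not> tmap_eq (\<lambda>x. F (x + c) + - c) F" using t(2) by (simp add: c_def)
  next
    fix x
    have dx: "dist (x + c) x < m" using nc by (simp add: dist_norm)
    have "norm (F (x + c) + - c - F x) \<le> norm (F (x + c) - F x) + norm c"
      using norm_triangle_ineq4[of "F (x + c) - F x" c] by (simp add: algebra_simps)
    also have "norm (F (x + c) - F x) < \<epsilon> / 2" using d1(2)[of "x + c" x] dx by (simp add: m_def dist_norm)
    also have "norm c < \<epsilon> / 2" using nc by (simp add: m_def)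
    finally show "norm (F (x + c) + - c - F x) < \<epsilon>" by simp
    have "dist (matrix (frechet_derivative F (at (x + c)))) (matrix (frechet_derivative F (at x))) < \<epsilon>"
      using d2(2)[of "x + c" x] dx by (simp add: m_def)
    then show "norm (matrix (frechet_derivative (\<lambda>x. F (x + c) + - c) (at x)) - matrix (frechet_derivative F (at x))) < \<epsilon>"
      unfolding fd_shift by (simp add: dist_norm)
  qed
qed

theorem mainTheorem15:
  fixes A :: "int^2^2"
  assumes "det A = 1 \<or> det A = -1"
    and "A ** A = mat 1"
    and "A \<noteq> mat 1" and "A \<noteq> - mat 1"
  shows "(\<exists>F G. good_map A F G) \<and>
    (\<forall>F G \<epsilon>. good_map A F G \<and> \<epsilon> > 0 \<longrightarrow>
       (\<exists>F' G'. good_map A F' G' \<and> \<not> tmap_eq F' F \<and>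
          (\<forall>x. norm (F' x - F x) < \<epsilon> \<and>
               norm (matrix (frechet_derivative F' (at x)) - matrix (frechet_derivative F (at x))) < \<epsilon>)))"
proof
  show "\<exists>F G. good_map A F G" by (rule exists_good[OF assms(2-4)])
  obtain p where p: "p \<noteq> 0" "lin_lift A p = p" using fixed_vec[OF assms(2-4)] by blast
  show "\<forall>F G \<epsilon>. good_map A F G \<and> \<epsilon> > 0 \<longrightarrow>
       (\<exists>F' G'. good_map A F' G' \<and> \<not> tmap_eq F' F \<and>
          (\<forall>x. norm (F' x - F x) < \<epsilon> \<and>
               norm (matrix (frechet_derivative F' (at x)) - matrix (frechet_derivative F (at x))) < \<epsilon>))"
    using perturb[OF _ _ p] by blast
qed

end
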